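(* Let $q\in\Bbbk$ be arbitrary, let $M$ be any left $\mathcal H_n(q)$-module, and let the subspaces $U_1,\dots,U_{n-1}$ of $M$ be defined either by $U_i=\operatorname{Ker}(T_i-q)_M$ for all $i$, or by $U_i=\operatorname{Im}(T_i+1)_M$ for all $i$. For $0\le i<n$ put $$x_i=\sum_{\sigma\in\mathcal D_i}T_\sigma,\qquad y_i=\sum_{\sigma\in\mathcal D_i^\triangledown}(-1)^{\ell(\sigma)}q^{\,n-1-i-\ell(\sigma)}T_\sigma,$$ where $\mathcal D_i=\{e,\tau_i,\tau_{i-1}\tau_i,\dots,\tau_1\tau_2\cdots\tau_i\}$ and $\mathcal D_i^\triangledown=\{e,\tau_{i+1},\tau_{i+1}\tau_{i+2},\dots,\tau_{i+1}\tau_{i+2}\cdots\tau_{n-1}\}$. Then (i) $x_i$ maps $\Upsilon_i$ into $\Upsilon_{i+1}$ and $y_i$ maps $\Sigma_i$ into $\Sigma_{i+1}$; (ii) the element $x_iy_i$ induces a linear map $s_i:K_i\to K_{i+1}$ of the components of the complex $K_\bullet(M;(U_i))$; (iii) $\partial_{i+1}s_i+s_{i-1}\partial_i=[n]_q\,\mathrm{Id}$ on $K_i$ for $0\le i\le n$ (with $s_{-1}=0$, $s_n=0$, $\partial_0=0$, $\partial_{n+1}=0$). Consequently, if $[n]_q=1+q+\dots+q^{n-1}\neq0$, the complex $K_\bullet(M;(U_i))$ is exact.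
   Context: $\mathcal H_n(q)$ is the Hecke algebra over a field $\Bbbk$ with generators $T_1,\dots,T_{n-1}$, braid relations and $(T_i-q)(T_i+1)=0$ (here $q=0$ is allowed), with standard basis $T_\sigma$, $\sigma\in\mathfrak S_n$ ($T_e=1$, $T_{\tau_i\sigma}=T_iT_\sigma$ when $\ell(\tau_i\sigma)>\ell(\sigma)$, $\tau_i=(i,i+1)$). For $x\in\mathcal H_n$, $x_M$ denotes the operator by which $x$ acts on $M$. Given subspaces $U_1,\dots,U_{n-1}$ of a vector space $M$, the complex $K_\bullet(M;(U_i))$: $0\to K_n\to\dots\to K_i\xrightarrow{\partial_i}K_{i-1}\to\dots\to K_0\to0$ has $K_i=\Upsilon_i/(\Upsilon_i\cap\Sigma_i)$ for $0\le i\le n$, where $\Upsilon_i=\bigcap_{j<i}U_j$, $\Sigma_i=\sum_{j>i}U_j$ (with $\Upsilon_0=\Upsilon_1=M$ and $\Sigma_{n-1}=\Sigma_n=0$), and differentials induced by the inclusions $\Upsilon_i\subset\Upsilon_{i-1}$, $\Sigma_i\subset\Sigma_{i-1}$. *)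

theory Defs
  imports Complex_Main
begin

text \<open>A left module over the Hecke algebra H_n(q) over a field 'k: a 'k-vector space M
  (given by the scalar multiplication scale) together with linear operators T 1, ..., T (n-1)
  satisfying the defining relations of H_n(q).  (Generators-and-relations presentation.)\<close>

definition hecke_module ::
  "('k::field \<Rightarrow> 'm::ab_group_add \<Rightarrow> 'm) \<Rightarrow> nat \<Rightarrow> 'k \<Rightarrow> (nat \<Rightarrow> 'm \<Rightarrow> 'm) \<Rightarrow> bool" where
  "hecke_module scale n q T \<longleftrightarrow>
     vector_space scale \<and>
     (\<forall>i\<in>{1..<n}. Vector_Spaces.linear scale scale (T i)) \<and>
     (\<forall>i\<in>{1..<n}. \<forall>v. (\<lambda>w. T i w - scale q w) ((\<lambda>w. T i w + w) v) = 0) \<and>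
     (\<forall>i. 1 \<le> i \<and> i + 2 \<le> n \<longrightarrow> (\<forall>v. T i (T (Suc i) (T i v)) = T (Suc i) (T i (T (Suc i) v)))) \<and>
     (\<forall>i\<in>{1..<n}. \<forall>j\<in>{1..<n}. i + 2 \<le> j \<longrightarrow> (\<forall>v. T i (T j v) = T j (T i v)))"

text \<open>Action of T_w for a word w = [i1,...,ik] in the simple transpositions:
  T_{tau_i1 ... tau_ik} = T_i1 ... T_ik (for reduced words).\<close>
fun Tw :: "(nat \<Rightarrow> 'm \<Rightarrow> 'm) \<Rightarrow> nat list \<Rightarrow> 'm \<Rightarrow> 'm" where
  "Tw T [] v = v"
| "Tw T (i # w) v = T i (Tw T w v)"

text \<open>D_i = {e, tau_i, tau_(i-1) tau_i, ..., tau_1 ... tau_i}, as reduced words tau_j ... tau_i, 1 <= j <= i+1.\<close>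
definition Dset :: "nat \<Rightarrow> nat list set" where
  "Dset i = {[j..<Suc i] | j. 1 \<le> j \<and> j \<le> Suc i}"

text \<open>D_i^nabla = {e, tau_(i+1), ..., tau_(i+1) ... tau_(n-1)}, reduced words tau_(i+1) ... tau_(i+k).\<close>
definition Dnab :: "nat \<Rightarrow> nat \<Rightarrow> nat list set" where
  "Dnab n i = {[Suc i..<Suc i + k] | k. k \<le> n - 1 - i}"

text \<open>x_i and y_i acting on M; the length of the (reduced) word is the Coxeter length.\<close>
definition hx :: "(nat \<Rightarrow> 'm::ab_group_add \<Rightarrow> 'm) \<Rightarrow> nat \<Rightarrow> 'm \<Rightarrow> 'm" where
  "hx T i v = (\<Sum>w\<in>Dset i. Tw T w v)"

definition hy :: "('k::field \<Rightarrow> 'm::ab_group_add \<Rightarrow> 'm) \<Rightarrow> nat \<Rightarrow> 'k \<Rightarrow> (nat \<Rightarrow> 'm \<Rightarrow> 'm)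
    \<Rightarrow> nat \<Rightarrow> 'm \<Rightarrow> 'm" where
  "hy scale n q T i v =
     (\<Sum>w\<in>Dnab n i. scale ((-1) ^ length w * q ^ (n - 1 - i - length w)) (Tw T w v))"

definition Ups :: "(nat \<Rightarrow> 'm set) \<Rightarrow> nat \<Rightarrow> 'm set" where
  "Ups U i = (\<Inter>j\<in>{1..<i}. U j)"

definition Sig :: "('k::field \<Rightarrow> 'm::ab_group_add \<Rightarrow> 'm) \<Rightarrow> nat \<Rightarrow> (nat \<Rightarrow> 'm set) \<Rightarrow> nat \<Rightarrow> 'm set" where
  "Sig scale n U i = module.span scale (\<Union>j\<in>{Suc i..<n}. U j)"

text \<open>Equality in K_i = Upsilon_i / (Upsilon_i \<inter> Sigma_i) of the classes of a, b.\<close>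
definition Keq :: "('k::field \<Rightarrow> 'm::ab_group_add \<Rightarrow> 'm) \<Rightarrow> nat \<Rightarrow> (nat \<Rightarrow> 'm set) \<Rightarrow> nat \<Rightarrow> 'm \<Rightarrow> 'm \<Rightarrow> bool" where
  "Keq scale n U i a b \<longleftrightarrow> a - b \<in> Ups U i \<inter> Sig scale n U i"

text \<open>Exactness of K_n -> ... -> K_0 (with K_(n+1) = 0 and d_0 = 0), the differentials being
  induced by the inclusions: at K_i, every class [v] (v in Upsilon_i) with d_i [v] = 0 in K_(i-1)
  is d_(i+1) [w] for some w in Upsilon_(i+1).\<close>
definition K_exact :: "('k::field \<Rightarrow> 'm::ab_group_add \<Rightarrow> 'm) \<Rightarrow> nat \<Rightarrow> (nat \<Rightarrow> 'm set) \<Rightarrow> bool" where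
  "K_exact scale n U \<longleftrightarrow>
     (\<forall>i\<le>n. \<forall>v\<in>Ups U i. (i = 0 \<or> Keq scale n U (i - 1) v 0) \<longrightarrow>
        (\<exists>w\<in>(if i < n then Ups U (Suc i) else {0}). Keq scale n U i v w))"

definition qint :: "nat \<Rightarrow> 'k::field \<Rightarrow> 'k" where
  "qint n q = (\<Sum>k<n. q ^ k)"

end

theory Submission
  imports Defs
begin


lemma Tw_append: "Tw T (xs @ ys) v = Tw T xs (Tw T ys v)"
  by (induct xs) auto

primrec Xf :: "(nat \<Rightarrow> 'm \<Rightarrow> 'm) \<Rightarrow> nat \<Rightarrow> 'm::ab_group_add \<Rightarrow> 'm" where
  "Xf T 0 v = v"
| "Xf T (Suc i) v = Xf T i (T (Suc i) v) + v"

lemma Xf_closed: "Xf T i v = (\<Sum>j\<in>{1..Suc i}. Tw T [j..<Suc i] v)"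
proof (induct i arbitrary: v)
  case 0 then show ?case by simp
next
  case (Suc i)
  have "(\<Sum>j\<in>{1..Suc (Suc i)}. Tw T [j..<Suc (Suc i)] v)
      = (\<Sum>j\<in>{1..Suc i}. Tw T [j..<Suc (Suc i)] v) + v"
    by (simp add: sum.cl_ivl_Suc)
  also have "(\<Sum>j\<in>{1..Suc i}. Tw T [j..<Suc (Suc i)] v) = (\<Sum>j\<in>{1..Suc i}. Tw T [j..<Suc i] (T (Suc i) v))"
    by (rule sum.cong) (auto simp: upt_Suc_append Tw_append)
  finally show ?case using Suc by simp
qed

lemma hx_Xf: "hx T i v = Xf T i v"
proof -
  have D: "Dset i = (\<lambda>j. [j..<Suc i]) ` {1..Suc i}" unfolding Dset_def image_def by (auto simp del: upt.simps)
  have I: "inj_on (\<lambda>j. [j..<Suc i]) {1..Suc i}"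
  proof (rule inj_onI)
    fix a b assume "a \<in> {1..Suc i}" "b \<in> {1..Suc i}" "[a..<Suc i] = [b..<Suc i]"
    then show "a = b" by (metis atLeastAtMost_iff diff_diff_cancel length_upt)
  qed
  show ?thesis unfolding hx_def D Xf_closed sum.reindex[OF I] comp_def ..
qed

primrec Yr :: "('k::field \<Rightarrow> 'm::ab_group_add \<Rightarrow> 'm) \<Rightarrow> 'k \<Rightarrow> (nat \<Rightarrow> 'm \<Rightarrow> 'm) \<Rightarrow> nat \<Rightarrow> nat \<Rightarrow> 'm \<Rightarrow> 'm" where
  "Yr sc q T i 0 v = v"
| "Yr sc q T i (Suc N) v = sc (q ^ Suc N) v - T (Suc i) (Yr sc q T (Suc i) N v)"

definition qint' :: "nat \<Rightarrow> 'k::field \<Rightarrow> 'k" where "qint' = qint"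

lemma qint_Suc: "qint (Suc k) q = qint k q + q ^ k" by (simp add: qint_def)
lemma qint_Suc': "qint (Suc k) q = 1 + q * qint k q"
  unfolding qint_def sum.lessThan_Suc_shift by (simp add: sum_distrib_left)
lemma qint_0[simp]: "qint 0 q = 0" by (simp add: qint_def)
lemma qint_add: "qint (a + b) q = qint a q + q ^ a * qint b q"
  by (induct b) (simp_all add: qint_Suc algebra_simps power_add)
lemma qint_Suc0[simp]: "qint (Suc 0) q = 1" by (simp add: qint_def)
lemma qint_1[simp]: "qint 1 q = 1" by (simp add: qint_def)



locale hk = vector_space scale
  for scale :: "'k::field \<Rightarrow> 'm::ab_group_add \<Rightarrow> 'm" +
  fixes n :: nat and q :: 'k and T :: "nat \<Rightarrow> 'm \<Rightarrow> 'm" and U :: "nat \<Rightarrow> 'm set"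
  assumes Tlin: "1 \<le> i \<Longrightarrow> i < n \<Longrightarrow> module_hom scale scale (T i)"
  and quad: "1 \<le> i \<Longrightarrow> i < n \<Longrightarrow> T i (T i v + v) - scale q (T i v + v) = 0"
  and braid: "1 \<le> i \<Longrightarrow> i + 2 \<le> n \<Longrightarrow> T i (T (Suc i) (T i v)) = T (Suc i) (T i (T (Suc i) v))"
  and comm: "1 \<le> i \<Longrightarrow> j < n \<Longrightarrow> i + 2 \<le> j \<Longrightarrow> T i (T j v) = T j (T i v)"
  and Ucase: "(\<forall>i\<in>{1..<n}. U i = {v. T i v - scale q v = 0}) \<or> (\<forall>i\<in>{1..<n}. U i = range (\<lambda>v. T i v + v))"
begin

lemma Tadd: "1 \<le> i \<Longrightarrow> i < n \<Longrightarrow> T i (x + y) = T i x + T i y"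
  using module_hom.add[OF Tlin] by blast
lemma Tsc: "1 \<le> i \<Longrightarrow> i < n \<Longrightarrow> T i (scale c x) = scale c (T i x)"
  using module_hom.scale[OF Tlin] by blast
lemma Tdiff: "1 \<le> i \<Longrightarrow> i < n \<Longrightarrow> T i (x - y) = T i x - T i y"
  using module_hom.diff[OF Tlin] by blast
lemma Tsum: "1 \<le> i \<Longrightarrow> i < n \<Longrightarrow> T i (sum f A) = (\<Sum>a\<in>A. T i (f a))"
  using module_hom.sum[OF Tlin] by blast
lemma Tzero: "1 \<le> i \<Longrightarrow> i < n \<Longrightarrow> T i 0 = 0"
  using module_hom.zero[OF Tlin] by blast

lemma subU: "1 \<le> i \<Longrightarrow> i < n \<Longrightarrow> subspace (U i)"
  using Ucase
proof
  assume "\<forall>i\<in>{1..<n}. U i = {v. T i v - scale q v = 0}"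
  moreover assume "1 \<le> i" "i < n"
  ultimately show ?thesis
    by (auto simp: subspace_def Tadd Tsc Tzero algebra_simps scale_left_commute)
next
  assume "\<forall>i\<in>{1..<n}. U i = range (\<lambda>v. T i v + v)"
  moreover assume i: "1 \<le> i" "i < n"
  ultimately show ?thesis
    unfolding subspace_def
  proof (intro conjI ballI allI)
    show "0 \<in> U i" using i \<open>\<forall>i\<in>_. _\<close> by (auto intro!: image_eqI[of _ _ 0] simp: Tzero)
    fix x y assume "x \<in> U i" "y \<in> U i"
    then show "x + y \<in> U i" using i \<open>\<forall>i\<in>_. _\<close>
      by (auto intro!: image_eqI[of _ _ "_ + _"] simp: Tadd algebra_simps)
  next
    fix c x assume "x \<in> U i"
    then show "scale c x \<in> U i" using i \<open>\<forall>i\<in>_. _\<close>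
      by (auto intro!: image_eqI[of _ _ "scale c _"] simp: Tsc algebra_simps)
  qed
qed

lemma TU: "1 \<le> i \<Longrightarrow> i < n \<Longrightarrow> u \<in> U i \<Longrightarrow> T i u = scale q u"
  using Ucase quad by auto

lemma ImU: "1 \<le> i \<Longrightarrow> i < n \<Longrightarrow> T i v + v \<in> U i"
  using Ucase quad by auto

lemma intertw:
  assumes a: "1 \<le> a" "a < n" and b: "1 \<le> b" "b < n"
    and Cadd: "\<And>x y. C (x + y) = C x + C y" and Csc: "\<And>c x. C (scale c x) = scale c (C x)"
    and Ccom: "\<And>v. T b (C v) = C (T a v)"
    and u: "u \<in> U a"
  shows "C u \<in> U b"
  using Ucase
proof
  assume K: "\<forall>i\<in>{1..<n}. U i = {v. T i v - scale q v = 0}"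
  then have "T a u = scale q u" using u a by auto
  then show ?thesis using K a b Ccom Csc by auto
next
  assume K: "\<forall>i\<in>{1..<n}. U i = range (\<lambda>v. T i v + v)"
  then obtain v where "u = T a v + v" using u a by auto
  then have "C u = T b (C v) + C v" using Cadd Ccom by simp
  then show ?thesis using K b by auto
qed

lemma Tpres: "1 \<le> k \<Longrightarrow> k < n \<Longrightarrow> 1 \<le> j \<Longrightarrow> j < n \<Longrightarrow> (k + 2 \<le> j \<or> j + 2 \<le> k)
   \<Longrightarrow> u \<in> U j \<Longrightarrow> T k u \<in> U j"
  apply (rule intertw[of j j "T k"]) apply (auto simp: Tadd Tsc comm)
  using comm[of j k] by (auto simp: eval_nat_numeral)

lemma Tbr: "1 \<le> a \<Longrightarrow> a + 2 \<le> n \<Longrightarrow> u \<in> U a \<Longrightarrow> T a (T (Suc a) u) \<in> U (Suc a)"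
  by (rule intertw[of a "Suc a" "\<lambda>v. T a (T (Suc a) v)"]) (auto simp: Tadd Tsc braid)

end


context hk begin

lemma Xadd: "i < n \<Longrightarrow> Xf T i (x + y) = Xf T i x + Xf T i y"
  by (induct i arbitrary: x y) (auto simp: Tadd algebra_simps)
lemma Xsc: "i < n \<Longrightarrow> Xf T i (scale c x) = scale c (Xf T i x)"
  by (induct i arbitrary: x) (auto simp: Tsc algebra_simps)
lemma Xhom: "i < n \<Longrightarrow> module_hom scale scale (Xf T i)"
  by (simp add: module_hom_iff module_axioms Xadd Xsc)
lemma Xdiff: "i < n \<Longrightarrow> Xf T i (x - y) = Xf T i x - Xf T i y"
  using module_hom.diff[OF Xhom] by blast

lemma Xpres: "m + 2 \<le> j \<Longrightarrow> j < n \<Longrightarrow> u \<in> U j \<Longrightarrow> Xf T m u \<in> U j"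
proof (induct m arbitrary: u)
  case 0 then show ?case by simp
next
  case (Suc m)
  have "T (Suc m) u \<in> U j" using Suc.prems by (intro Tpres) auto
  then have "Xf T m (T (Suc m) u) \<in> U j" using Suc by auto
  then show ?case using Suc.prems subU[of j] by (auto intro: subspace_add)
qed

lemma Xcore:
  assumes k: "1 \<le> k" "k < n" and w: "2 \<le> k \<Longrightarrow> w \<in> U (k - 1)"
  shows "Xf T k w \<in> U k"
proof (cases k)
  case 0 then show ?thesis using k by simp
next
  case (Suc k')
  show ?thesis
  proof (cases k')
    case 0 then show ?thesis using Suc k ImU[of 1 w] by simp
  next
    case (Suc m)
    have wm: "w \<in> U (Suc m)" using w \<open>k = Suc k'\<close> Suc by simp
    have "T (Suc m) (T (Suc (Suc m)) w) \<in> U (Suc (Suc m))"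
      using Tbr[of "Suc m" w] wm k \<open>k = Suc k'\<close> Suc by simp
    then have A: "Xf T m (T (Suc m) (T (Suc (Suc m)) w)) \<in> U (Suc (Suc m))"
      using k \<open>k = Suc k'\<close> Suc by (intro Xpres) auto
    have B: "T (Suc (Suc m)) w + w \<in> U (Suc (Suc m))"
      using k \<open>k = Suc k'\<close> Suc by (intro ImU) auto
    have "Xf T k w = Xf T m (T (Suc m) (T (Suc (Suc m)) w)) + (T (Suc (Suc m)) w + w)"
      using \<open>k = Suc k'\<close> Suc by (simp add: add.assoc)
    moreover have S: "subspace (U (Suc (Suc m)))" using subU k \<open>k = Suc k'\<close> Suc by simp
    ultimately show ?thesis using A B \<open>k = Suc k'\<close> Suc by (metis subspace_add)
  qed
qed

lemma Xups: "i < n \<Longrightarrow> (\<forall>j. 1 \<le> j \<longrightarrow> j < i \<longrightarrow> v \<in> U j) \<Longrightarrow> 1 \<le> k \<Longrightarrow> k \<le> i \<Longrightarrow> Xf T i v \<in> U k"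
proof (induct i arbitrary: v k)
  case 0 then show ?case by simp
next
  case (Suc i)
  show ?case
  proof (cases "k = Suc i")
    case True
    then show ?thesis using Suc.prems Xcore[of "Suc i" v] by auto
  next
    case False
    then have ki: "k \<le> i" using Suc.prems by simp
    have "\<forall>j. 1 \<le> j \<longrightarrow> j < i \<longrightarrow> T (Suc i) v \<in> U j"
      using Suc.prems by (auto intro!: Tpres)
    then have "Xf T i (T (Suc i) v) \<in> U k" using Suc ki by auto
    moreover have "v \<in> U k" using Suc.prems ki by auto
    ultimately show ?thesis using subU[of k] Suc.prems ki by (auto intro: subspace_add)
  qed
qed

lemma Xeval: "m < n \<Longrightarrow> (\<forall>j. 1 \<le> j \<longrightarrow> j \<le> m \<longrightarrow> v \<in> U j) \<Longrightarrow> Xf T m v = scale (qint (Suc m) q) v"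
proof (induct m)
  case 0 then show ?case by simp
next
  case (Suc m)
  have "T (Suc m) v = scale q v" using Suc.prems by (intro TU) auto
  then have "Xf T (Suc m) v = scale q (Xf T m v) + v" using Suc.prems by (simp add: Xsc)
  also have "\<dots> = scale (qint (Suc (Suc m)) q) v" using Suc
    by (simp add: qint_Suc'[of "Suc m"] algebra_simps)
  finally show ?case .
qed

lemma Ups_iff: "v \<in> Ups U i \<longleftrightarrow> (\<forall>j. 1 \<le> j \<longrightarrow> j < i \<longrightarrow> v \<in> U j)"
  by (auto simp: Ups_def)

lemma subUps: "i \<le> n \<Longrightarrow> subspace (Ups U i)"
  unfolding Ups_def by (rule subspace_Int) (auto intro: subU)

lemma lin_span: "module_hom scale scale f \<Longrightarrow> (\<And>x. x \<in> S \<Longrightarrow> f x \<in> span B) \<Longrightarrow> v \<in> span S \<Longrightarrow> f v \<in> span B"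
proof -
  assume f: "module_hom scale scale f" and S: "\<And>x. x \<in> S \<Longrightarrow> f x \<in> span B" and v: "v \<in> span S"
  have "f v \<in> f ` span S" using v by auto
  also have "f ` span S = span (f ` S)" using module_hom.span_image[OF f] by simp
  also have "\<dots> \<subseteq> span B" using S by (intro span_minimal) (auto simp: subspace_span)
  finally show ?thesis .
qed

lemma Sig_mono: "Sig scale n U (Suc i) \<subseteq> Sig scale n U i"
  unfolding Sig_def by (rule span_mono) force

lemma U_Sig: "i < k \<Longrightarrow> k < n \<Longrightarrow> u \<in> U k \<Longrightarrow> u \<in> Sig scale n U i"
  unfolding Sig_def by (rule span_base) auto

lemma T_Sig: "1 \<le> k \<Longrightarrow> k < n \<Longrightarrow> k + 1 \<le> i \<Longrightarrow> v \<in> Sig scale n U i \<Longrightarrow> T k v \<in> Sig scale n U i"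
proof -
  assume k: "1 \<le> k" "k < n" "k + 1 \<le> i" and v: "v \<in> Sig scale n U i"
  show ?thesis using v unfolding Sig_def
  proof (rule lin_span[OF Tlin[OF k(1) k(2)], rotated])
    fix x assume "x \<in> (\<Union>j\<in>{Suc i..<n}. U j)"
    then obtain j where j: "j \<in> {Suc i..<n}" "x \<in> U j" by auto
    then have "T k x \<in> U j" using k by (intro Tpres) auto
    then show "T k x \<in> span (\<Union>j\<in>{Suc i..<n}. U j)" using j by (intro span_base) auto
  qed
qed

lemma T_Sig2: "Suc i < n \<Longrightarrow> v \<in> Sig scale n U (Suc i) \<Longrightarrow> T (Suc i) v \<in> Sig scale n U i"
proof -
  assume i: "Suc i < n" and v: "v \<in> Sig scale n U (Suc i)"
  have hom: "module_hom scale scale (T (Suc i))" using Tlin i by simp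
  have "T (Suc i) v \<in> span (\<Union>j\<in>{Suc i..<n}. U j)"
  proof (rule lin_span[OF hom _ v[unfolded Sig_def]])
    fix x assume "x \<in> (\<Union>j\<in>{Suc (Suc i)..<n}. U j)"
    then obtain j where j: "j \<in> {Suc (Suc i)..<n}" "x \<in> U j" by auto
    have "T (Suc i) x = (T (Suc i) x + x) - x" by simp
    moreover have "T (Suc i) x + x \<in> span (\<Union>j\<in>{Suc i..<n}. U j)"
      using ImU[of "Suc i" x] i by (intro span_base) auto
    moreover have "x \<in> span (\<Union>j\<in>{Suc i..<n}. U j)" using j by (intro span_base) auto
    ultimately show "T (Suc i) x \<in> span (\<Union>j\<in>{Suc i..<n}. U j)" by (metis span_diff)
  qed
  then show ?thesis unfolding Sig_def .
qed

lemma X_Sig: "m < n \<Longrightarrow> m + 1 \<le> i \<Longrightarrow> v \<in> Sig scale n U i \<Longrightarrow> Xf T m v \<in> Sig scale n U i"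
  unfolding Sig_def
proof (rule lin_span[OF Xhom, rotated])
  fix x assume "m + 1 \<le> i" "x \<in> (\<Union>j\<in>{Suc i..<n}. U j)"
  then obtain j where j: "j \<in> {Suc i..<n}" "x \<in> U j" "m + 2 \<le> j" by auto
  then have "Xf T m x \<in> U j" by (intro Xpres) auto
  then show "Xf T m x \<in> span (\<Union>j\<in>{Suc i..<n}. U j)" using j by (intro span_base) auto
qed

end


context hk begin

abbreviation Y where "Y \<equiv> Yr scale q T"

lemma Yadd: "i + N < n \<Longrightarrow> Y i N (x + y) = Y i N x + Y i N y"
  by (induct N arbitrary: i x y) (auto simp: Tadd algebra_simps)
lemma Ysc: "i + N < n \<Longrightarrow> Y i N (scale c x) = scale c (Y i N x)"
  by (induct N arbitrary: i x) (auto simp: Tsc Tdiff algebra_simps scale_left_commute)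
lemma Yhom: "i + N < n \<Longrightarrow> module_hom scale scale (Y i N)"
  by (simp add: module_hom_iff module_axioms Yadd Ysc)

lemma Ypres: "i + N < n \<Longrightarrow> 1 \<le> j \<Longrightarrow> j + 1 \<le> i \<Longrightarrow> u \<in> U j \<Longrightarrow> Y i N u \<in> U j"
proof (induct N arbitrary: i)
  case 0 then show ?case by simp
next
  case (Suc N)
  have "Y (Suc i) N u \<in> U j" using Suc by auto
  then have "T (Suc i) (Y (Suc i) N u) \<in> U j" using Suc.prems by (intro Tpres) auto
  moreover have "scale (q ^ Suc N) u \<in> U j" using Suc.prems subU[of j] by (auto intro: subspace_scale)
  ultimately show ?case using Suc.prems subU[of j] by (auto intro: subspace_diff)
qed

lemma YUps: "i + N < n \<Longrightarrow> v \<in> Ups U i \<Longrightarrow> Y i N v \<in> Ups U i"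
  unfolding Ups_iff by (auto intro: Ypres)

lemma Sig_top: "n - 1 \<le> i \<Longrightarrow> Sig scale n U i = {0}"
  unfolding Sig_def by simp

lemma Ysig: "i + N = n - 1 \<Longrightarrow> 1 \<le> n \<Longrightarrow> v \<in> Sig scale n U i \<Longrightarrow> Y i N v \<in> Sig scale n U (Suc i)"
proof (induct N arbitrary: i v)
  case 0
  then have "v = 0" using Sig_top[of i] by auto
  then show ?case by (simp add: Sig_def span_zero)
next
  case (Suc M)
  have i: "Suc i < n" "Suc i + M = n - 1" using Suc.prems by auto
  have "Y i (Suc M) v \<in> span (\<Union>j\<in>{Suc (Suc i)..<n}. U j)"
  proof (rule lin_span[OF Yhom _ Suc.prems(3)[unfolded Sig_def]])
    show "i + Suc M < n" using Suc.prems by auto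
  next
    fix x assume "x \<in> (\<Union>j\<in>{Suc i..<n}. U j)"
    then obtain j where j: "j \<in> {Suc i..<n}" "x \<in> U j" by auto
    show "Y i (Suc M) x \<in> span (\<Union>j\<in>{Suc (Suc i)..<n}. U j)"
    proof (cases "j = Suc i")
      case False
      then have xs: "x \<in> Sig scale n U (Suc i)" using j by (intro U_Sig) auto
      have "Y (Suc i) M x \<in> Sig scale n U (Suc (Suc i))" using Suc.hyps[OF i(2) Suc.prems(2) xs] .
      then have "T (Suc i) (Y (Suc i) M x) \<in> Sig scale n U (Suc (Suc i))"
        using i by (intro T_Sig) auto
      then have "T (Suc i) (Y (Suc i) M x) \<in> Sig scale n U (Suc i)" using Sig_mono by auto
      then show ?thesis using xs unfolding Sig_def by (simp add: span_diff span_scale)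
    next
      case True
      then have xU: "x \<in> U (Suc i)" using j by simp
      have Tx: "T (Suc i) x = scale q x" using TU[OF _ i(1) xU] by simp
      show ?thesis
      proof (cases M)
        case 0 then show ?thesis using Tx by (simp add: span_zero)
      next
        case (Suc M')
        define z where "z = Y (Suc (Suc i)) M' x"
        have zU: "z \<in> U (Suc i)" unfolding z_def using i Suc by (intro Ypres xU) auto
        have "T (Suc i) (T (Suc (Suc i)) z) \<in> U (Suc (Suc i))" using i Suc by (intro Tbr zU) auto
        then have "T (Suc i) (T (Suc (Suc i)) z) \<in> Sig scale n U (Suc i)" using i Suc by (intro U_Sig) auto
        moreover have "Y i (Suc M) x = T (Suc i) (T (Suc (Suc i)) z)"
          using Suc i unfolding z_def by (simp add: Tdiff Tsc Tx)
        ultimately show ?thesis unfolding Sig_def by simp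
      qed
    qed
  qed
  then show ?case unfolding Sig_def .
qed

lemma Ycong: "i + N = n - 1 \<Longrightarrow> 1 \<le> n \<Longrightarrow> Y i N v - scale (qint (Suc N) q) v \<in> Sig scale n U i"
proof (induct N arbitrary: i)
  case 0 then show ?case by (simp add: Sig_def span_zero)
next
  case (Suc M)
  have i: "Suc i < n" "Suc i + M = n - 1" using Suc.prems by auto
  define s where "s = Y (Suc i) M v - scale (qint (Suc M) q) v"
  have s: "s \<in> Sig scale n U (Suc i)" unfolding s_def using Suc.hyps[OF i(2) Suc.prems(2)] .
  have Ye: "Y (Suc i) M v = s + scale (qint (Suc M) q) v" unfolding s_def by simp
  have "Y i (Suc M) v - scale (qint (Suc (Suc M)) q) v
      = - (T (Suc i) s + scale (qint (Suc M) q) (T (Suc i) v + v))"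
    using i by (simp add: Ye Tadd Tsc qint_Suc[of "Suc M"] algebra_simps)
  moreover have "T (Suc i) s \<in> Sig scale n U i" using T_Sig2[OF i(1) s] .
  moreover have "T (Suc i) v + v \<in> Sig scale n U i" using i ImU[of "Suc i" v] by (intro U_Sig) auto
  ultimately have "- (T (Suc i) s + scale (qint (Suc M) q) (T (Suc i) v + v)) \<in> Sig scale n U i"
    unfolding Sig_def by (meson span_neg span_add span_scale)
  then show ?case by (metis \<open>_ = - _\<close>)
qed

lemma Yclosed: "i + N < n \<Longrightarrow> Y i N v = (\<Sum>k\<le>N. scale ((-1)^k * q^(N-k)) (Tw T [Suc i..<Suc i + k] v))"
proof (induct N arbitrary: i)
  case 0 then show ?case by simp
next
  case (Suc N)
  have IH: "Y (Suc i) N v = (\<Sum>k\<le>N. scale ((-1)^k * q^(N-k)) (Tw T [Suc (Suc i)..<Suc (Suc i) + k] v))"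
    using Suc by (auto simp del: upt.simps)
  have tw: "Tw T [Suc i..<Suc i + Suc k] v = T (Suc i) (Tw T [Suc (Suc i)..<Suc (Suc i) + k] v)" for k
    by (simp add: upt_conv_Cons del: upt.simps)
  have tw2: "Tw T [Suc i..<Suc (Suc (i + k))] v = T (Suc i) (Tw T [Suc (Suc i)..<Suc (Suc (i + k))] v)" for k
    by (simp add: upt_conv_Cons del: upt.simps)
  have "(\<Sum>k\<le>Suc N. scale ((-1)^k * q^(Suc N-k)) (Tw T [Suc i..<Suc i + k] v))
     = scale (q ^ Suc N) v + (\<Sum>k\<le>N. scale ((-1)^Suc k * q^(Suc N - Suc k)) (Tw T [Suc i..<Suc i + Suc k] v))"
    unfolding sum.atMost_Suc_shift by (simp del: upt.simps)
  also have "\<dots> = scale (q ^ Suc N) v - (\<Sum>k\<le>N. scale ((-1)^k * q^(N-k)) (T (Suc i) (Tw T [Suc (Suc i)..<Suc (Suc i) + k] v)))"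
    by (simp add: tw tw2 sum_negf[symmetric] del: upt.simps)
  also have "\<dots> = Y i (Suc N) v"
    using Suc.prems by (simp add: IH Tsum Tsc del: upt.simps)
  finally show ?case by simp
qed

lemma hy_Y: "i < n \<Longrightarrow> hy scale n q T i v = Y i (n - 1 - i) v"
proof -
  assume i: "i < n"
  have D: "Dnab n i = (\<lambda>k. [Suc i..<Suc i + k]) ` {..n - 1 - i}"
    unfolding Dnab_def image_def by (auto simp del: upt.simps)
  have I: "inj_on (\<lambda>k. [Suc i..<Suc i + k]) {..n - 1 - i}"
    by (rule inj_onI) (metis add_diff_cancel_left' length_upt)
  show ?thesis unfolding hy_def D sum.reindex[OF I] comp_def using i
    by (simp add: Yclosed del: upt.simps)
qed

end


context hk begin

lemma hxhy: "i < n \<Longrightarrow> hx T i (hy scale n q T i v) = Xf T i (Y i (n - 1 - i) v)"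
  by (simp add: hx_Xf hy_Y)

lemma Ups_mono: "j \<le> i \<Longrightarrow> v \<in> Ups U i \<Longrightarrow> v \<in> Ups U j"
  unfolding Ups_iff by auto

lemma part1: "i < n \<Longrightarrow> v \<in> Ups U i \<Longrightarrow> hx T i v \<in> Ups U (Suc i)"
  unfolding hx_Xf Ups_iff by (auto intro: Xups)

lemma part1b: "i < n \<Longrightarrow> v \<in> Sig scale n U i \<Longrightarrow> hy scale n q T i v \<in> Sig scale n U (Suc i)"
  unfolding hy_Y by (rule Ysig) auto

lemma s_ups: "i < n \<Longrightarrow> v \<in> Ups U i \<Longrightarrow> Xf T i (Y i (n - 1 - i) v) \<in> Ups U (Suc i)"
  using part1[of i "Y i (n - 1 - i) v"] YUps[of i "n - 1 - i" v] by (simp add: hx_Xf)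

lemma s_sig: "i < n \<Longrightarrow> v \<in> Sig scale n U i \<Longrightarrow> Xf T i (Y i (n - 1 - i) v) \<in> Sig scale n U (Suc i)"
  using part1b[of i v] by (intro X_Sig) (auto simp: hy_Y)

lemma s_lin: "i < n \<Longrightarrow> Vector_Spaces.linear scale scale (\<lambda>v. hx T i (hy scale n q T i v))"
proof -
  assume i: "i < n"
  have "module_hom scale scale (Xf T i \<circ> Y i (n - 1 - i))"
    by (rule module_hom_compose[OF Yhom Xhom]) (use i in auto)
  then show ?thesis using i by (simp add: hxhy comp_def module_hom_iff_linear)
qed

lemma part3:
  assumes n: "1 \<le> n" and i: "i \<le> n" and v: "v \<in> Ups U i"
  shows "Keq scale n U i
             ((if i < n then hx T i (hy scale n q T i v) else 0)
              + (if 0 < i then hx T (i - 1) (hy scale n q T (i - 1) v) else 0))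
             (scale (qint n q) v)"
proof -
  define A where "A = (if i < n then hx T i (hy scale n q T i v) else 0)"
  define B where "B = (if 0 < i then hx T (i - 1) (hy scale n q T (i - 1) v) else 0)"
  have SU: "subspace (Ups U i)" using subUps i by simp
  have A: "A \<in> Ups U i"
    using s_ups[of i v] v Ups_mono[of i "Suc i"] SU unfolding A_def by (auto simp: hxhy subspace_0)
  have B: "B \<in> Ups U i"
  proof (cases "0 < i")
    case True
    then have "v \<in> Ups U (i - 1)" using v Ups_mono[of "i - 1" i v] by simp
    then show ?thesis using s_ups[of "i - 1" v] True i unfolding B_def by (simp add: hxhy)
  qed (simp add: B_def Ups_def)
  have D1: "A + B - scale (qint n q) v \<in> Ups U i"
    using A B v SU by (intro subspace_diff subspace_add subspace_scale) auto
  have D2: "A + B - scale (qint n q) v \<in> Sig scale n U i"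
  proof (cases "i = 0")
    case True
    then have "A + B = Y 0 (n - 1) v" using n by (simp add: A_def B_def hxhy)
    then show ?thesis using Ycong[of 0 "n - 1" v] n True by simp
  next
    case False
    show ?thesis
    proof (cases "i = n")
      case True
      have "\<forall>j. 1 \<le> j \<longrightarrow> j \<le> n - 1 \<longrightarrow> v \<in> U j" using v True n by (auto simp: Ups_iff)
      then have "A + B = scale (qint n q) v" using True False n
        by (simp add: A_def B_def hxhy Xeval)
      then show ?thesis by (simp add: Sig_def span_zero)
    next
      case False
      with \<open>i \<noteq> 0\<close> i obtain m where m: "i = Suc m" "Suc m < n" by (cases i) auto
      define N where "N = n - 1 - Suc m"
      have nN: "n - 1 - m = Suc N" "n = Suc N + Suc m" using m unfolding N_def by auto
      define z where "z = Y (Suc m) N v"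
      have vU: "\<forall>j. 1 \<le> j \<longrightarrow> j \<le> m \<longrightarrow> v \<in> U j" using v m by (auto simp: Ups_iff)
      have Ae: "A = Xf T m (T (Suc m) z) + z" using m unfolding A_def z_def N_def by (simp add: hxhy)
      have "B = Xf T m (Y m (n - 1 - m) v)"
        using m unfolding B_def by (simp add: hxhy)
      also have "\<dots> = Xf T m (scale (q ^ Suc N) v - T (Suc m) z)"
        unfolding nN(1) z_def by simp
      also have "\<dots> = scale (q ^ Suc N) (scale (qint (Suc m) q) v) - Xf T m (T (Suc m) z)"
        using m vU by (simp add: Xdiff Xsc Xeval)
      finally have Be: "B = scale (q ^ Suc N * qint (Suc m) q) v - Xf T m (T (Suc m) z)" by simp
      have "A + B - scale (qint n q) v = z - scale (qint (Suc N) q) v"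
        unfolding Ae Be nN(2) qint_add by (simp add: algebra_simps)
      moreover have "z - scale (qint (Suc N) q) v \<in> Sig scale n U (Suc m)"
        unfolding z_def using m nN by (intro Ycong) auto
      ultimately show ?thesis using m by simp
    qed
  qed
  show ?thesis unfolding Keq_def A_def[symmetric] B_def[symmetric] using D1 D2 by simp
qed

lemma part4:
  assumes n: "1 \<le> n" and c: "qint n q \<noteq> 0"
  shows "K_exact scale n U"
  unfolding K_exact_def
proof (intro allI impI ballI)
  fix i v assume i: "i \<le> n" and v: "v \<in> Ups U i" and h: "i = 0 \<or> Keq scale n U (i - 1) v 0"
  have SU: "subspace (Ups U i)" using subUps i by simp
  show "\<exists>w\<in>(if i < n then Ups U (Suc i) else {0}). Keq scale n U i v w"
  proof (cases "i = 0")
    case True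
    then show ?thesis using n SU by (intro bexI[of _ v]) (auto simp: Keq_def Ups_def Sig_def span_zero)
  next
    case False
    then have vS: "v \<in> Sig scale n U (i - 1)" "v \<in> Ups U (i - 1)" using h by (auto simp: Keq_def)
    have BS: "Xf T (i - 1) (Y (i - 1) (n - 1 - (i - 1)) v) \<in> Sig scale n U i"
      using s_sig[of "i - 1" v] vS False i by simp
    have P3: "(if i < n then Xf T i (Y i (n - 1 - i) v) else 0) + Xf T (i - 1) (Y (i - 1) (n - 1 - (i - 1)) v)
        - scale (qint n q) v \<in> Sig scale n U i"
      using part3[OF n i v] False i by (cases "i < n") (simp_all add: Keq_def hxhy)
    show ?thesis
    proof (cases "i < n")
      case True
      define A where "A = Xf T i (Y i (n - 1 - i) v)"
      have AS: "A - scale (qint n q) v \<in> Sig scale n U i"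
        using span_diff[OF P3[unfolded Sig_def] BS[unfolded Sig_def]] True
        by (simp add: A_def Sig_def algebra_simps)
      define w where "w = scale (inverse (qint n q)) A"
      have AU: "A \<in> Ups U (Suc i)" using s_ups[OF True v] by (simp add: A_def)
      have wU: "w \<in> Ups U (Suc i)" unfolding w_def using subUps[of "Suc i"] True AU
        by (intro subspace_scale) auto
      have vw: "v - w = - scale (inverse (qint n q)) (A - scale (qint n q) v)"
        using c by (simp add: w_def algebra_simps)
      have "v - w \<in> Sig scale n U i" unfolding vw using AS unfolding Sig_def by (intro span_neg span_scale)
      moreover have "v - w \<in> Ups U i" using v wU Ups_mono[of i "Suc i" w] SU by (intro subspace_diff) auto
      ultimately show ?thesis using True wU by (auto simp: Keq_def)
    next
      case False
      then have iN: "i = n" using i by simp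
      have "Sig scale n U n = {0}" by (rule Sig_top) simp
      then have "Xf T (i - 1) (Y (i - 1) (n - 1 - (i - 1)) v) = 0" "scale (qint n q) v = 0"
        using BS P3 iN by auto
      then have "v = 0" using c by simp
      then show ?thesis using False SU by (auto simp: Keq_def subspace_0 Sig_def span_zero)
    qed
  qed
qed

end

theorem lemma2p1:
  fixes scale :: "'k::field \<Rightarrow> 'm::ab_group_add \<Rightarrow> 'm" and n :: nat and q :: 'k
    and T :: "nat \<Rightarrow> 'm \<Rightarrow> 'm" and U :: "nat \<Rightarrow> 'm set"
  assumes H: "hecke_module scale n q T" and n: "1 \<le> n"
    and U: "(\<forall>i\<in>{1..<n}. U i = {v. T i v - scale q v = 0})
          \<or> (\<forall>i\<in>{1..<n}. U i = range (\<lambda>v. T i v + v))"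
  shows
    \<comment> \<open>(i)\<close>
    "(\<forall>i<n. (\<forall>v\<in>Ups U i. hx T i v \<in> Ups U (Suc i))
           \<and> (\<forall>v\<in>Sig scale n U i. hy scale n q T i v \<in> Sig scale n U (Suc i)))
     \<comment> \<open>(ii): x_i y_i induces a linear map s_i : K_i \<rightarrow> K_(i+1)\<close>
     \<and> (\<forall>i<n. Vector_Spaces.linear scale scale (\<lambda>v. hx T i (hy scale n q T i v))
           \<and> (\<forall>v\<in>Ups U i. hx T i (hy scale n q T i v) \<in> Ups U (Suc i))
           \<and> (\<forall>v\<in>Ups U i \<inter> Sig scale n U i.
                 hx T i (hy scale n q T i v) \<in> Ups U (Suc i) \<inter> Sig scale n U (Suc i)))
     \<comment> \<open>(iii): d_(i+1) s_i + s_(i-1) d_i = [n]_q Id on K_i, with s_(-1) = 0, s_n = 0\<close>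
     \<and> (\<forall>i\<le>n. \<forall>v\<in>Ups U i.
           Keq scale n U i
             ((if i < n then hx T i (hy scale n q T i v) else 0)
              + (if 0 < i then hx T (i - 1) (hy scale n q T (i - 1) v) else 0))
             (scale (qint n q) v))
     \<comment> \<open>consequence: exactness\<close>
     \<and> (qint n q \<noteq> 0 \<longrightarrow> K_exact scale n U)"
proof -
  have HH: "vector_space scale" "\<forall>i\<in>{1..<n}. Vector_Spaces.linear scale scale (T i)"
     "\<forall>i\<in>{1..<n}. \<forall>v. (\<lambda>w. T i w - scale q w) ((\<lambda>w. T i w + w) v) = 0"
     "\<forall>i. 1 \<le> i \<and> i + 2 \<le> n \<longrightarrow> (\<forall>v. T i (T (Suc i) (T i v)) = T (Suc i) (T i (T (Suc i) v)))"
     "\<forall>i\<in>{1..<n}. \<forall>j\<in>{1..<n}. i + 2 \<le> j \<longrightarrow> (\<forall>v. T i (T j v) = T j (T i v))"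
    using H unfolding hecke_module_def by blast+
  interpret hk scale n q T U
  proof (rule hk.intro[OF HH(1)], rule hk_axioms.intro)
    show "module_hom scale scale (T i)" if "1 \<le> i" "i < n" for i
      using HH(2) that by (auto intro: module_hom_linearI)
    show "T i (T i v + v) - scale q (T i v + v) = 0" if "1 \<le> i" "i < n" for i v
      using HH(3) that by auto
    show "T i (T (Suc i) (T i v)) = T (Suc i) (T i (T (Suc i) v))" if "1 \<le> i" "i + 2 \<le> n" for i v
      using HH(4) that by auto
    show "T i (T j v) = T j (T i v)" if "1 \<le> i" "j < n" "i + 2 \<le> j" for i j v
    proof -
      have "i \<in> {1..<n}" "j \<in> {1..<n}" using that by auto
      then show ?thesis using HH(5) that(3) by blast
    qed
    show "(\<forall>i\<in>{1..<n}. U i = {v. T i v - scale q v = 0}) \<or> (\<forall>i\<in>{1..<n}. U i = range (\<lambda>v. T i v + v))"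
      using U .
  qed
  show ?thesis
    using part1 part1b s_lin s_ups s_sig hxhy part3[OF n] part4[OF n] by simp
qed

end
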